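(* Let $d\ge2$, $p_c(z)=\bar z^d+c$, and suppose $p_{c_0}$ has a simple parabolic periodic point $z_0$ of odd period $k$. Then for any sequence $c_n\to c_0$ with $c_n\neq c_0$, the maps $p_{c_n}$ have periodic points $z_n$ and $z'_n$ both converging to $z_0$, with multipliers $\rho_n:=(p_{c_n}^{\circ 2k})'(z_n)\to1$ and $\rho'_n:=(p_{c_n}^{\circ 2k})'(z'_n)\to1$, such that for all large $n$ one of the following holds: (a) both $z_n$ and $z'_n$ have period $k$, $\rho_n,\rho'_n\in\mathbb{R}$, and one of the two orbits is attracting while the other is repelling; or (b) $z_n=z'_n$ lies on a parabolic orbit of period $k$; or (c) $z_n$ and $z'_n$ both have period $2k$, lie on the same orbit of $p_{c_n}$, satisfy $p_{c_n}^{\circ k}(z_n)=z'_n$ and $p_{c_n}^{\circ k}(z'_n)=z_n$, and their multipliers satisfy $\rho'_n=\overline{\rho_n}\notin\mathbb{R}$ and $\operatorname{Re}(\rho_n-1)=O(\operatorname{Im}(\rho_n)^2)$.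
   Context: A periodic point $z_0$ of odd period $k$ of $p_c$ is parabolic if $(p_c^{\circ2k})'(z_0)=1$ ($p_c^{\circ2k}$ is holomorphic), and simple if $p_c^{\circ2k}(z_0+w)=z_0+w+aw^2+O(w^3)$ with $a\neq0$. *)

theory Defs
  imports "HOL-Analysis.Analysis" "HOL-Library.Landau_Symbols"
begin

definition pc :: "nat \<Rightarrow> complex \<Rightarrow> complex \<Rightarrow> complex" where
  "pc d c = (\<lambda>z. cnj z ^ d + c)"

definition has_period :: "(complex \<Rightarrow> complex) \<Rightarrow> nat \<Rightarrow> complex \<Rightarrow> bool" where
  "has_period f k z \<longleftrightarrow> 0 < k \<and> (f ^^ k) z = z \<and> (\<forall>j. 0 < j \<and> j < k \<longrightarrow> (f ^^ j) z \<noteq> z)"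

definition mult2 :: "nat \<Rightarrow> complex \<Rightarrow> nat \<Rightarrow> complex \<Rightarrow> complex" where
  "mult2 d c k z = deriv (pc d c ^^ (2 * k)) z"

definition parabolic :: "nat \<Rightarrow> complex \<Rightarrow> nat \<Rightarrow> complex \<Rightarrow> bool" where
  "parabolic d c k z \<longleftrightarrow> has_period (pc d c) k z \<and> odd k \<and> mult2 d c k z = 1"

definition simple_parabolic :: "nat \<Rightarrow> complex \<Rightarrow> nat \<Rightarrow> complex \<Rightarrow> bool" where
  "simple_parabolic d c k z0 \<longleftrightarrow> parabolic d c k z0 \<and>
     (\<exists>a. a \<noteq> 0 \<and>
        (\<lambda>w. (pc d c ^^ (2 * k)) (z0 + w) - (z0 + w + a * w ^ 2)) \<in> O[at 0](\<lambda>w. w ^ 3))"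

end

theory Submission
  imports Defs "HOL-Computational_Algebra.Fundamental_Theorem_Algebra"
begin


lemma root_small:
  fixes P :: "complex poly"
  assumes "lead_coeff P = 1" "degree P \<ge> 1"
  shows "\<exists>r. poly P r = 0 \<and> norm r ^ degree P \<le> norm (poly P 0)"
proof -
  obtain rt where rt: "smult (lead_coeff P) (\<Prod>i<degree P. [:-rt i, 1:]) = P"
    using complex_poly_decompose' by blast
  hence P: "P = (\<Prod>i<degree P. [:-rt i, 1:])" using assms(1) by simp
  define m where "m = degree P"
  have Pm: "P = (\<Prod>i<m. [:-rt i, 1:])" using P unfolding m_def by simp
  have fin: "finite (norm ` rt ` {..<m})" by simp
  have ne: "norm ` rt ` {..<m} \<noteq> {}" using assms(2) unfolding m_def by (metis empty_is_image lessThan_empty_iff not_one_le_zero)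
  obtain i0 where i0: "i0 < m" "norm (rt i0) = Min (norm ` rt ` {..<m})"
    using Min_in[OF fin ne] by auto
  have le: "norm (rt i0) \<le> norm (rt i)" if "i < m" for i
    using i0(2) Min_le[OF fin] that by auto
  have "poly P (rt i0) = 0"
    unfolding Pm poly_prod using i0(1) by (intro prod_zero) auto
  moreover have "norm (rt i0) ^ m \<le> norm (poly P 0)"
  proof -
    have "norm (rt i0) ^ m = (\<Prod>i<m. norm (rt i0))" by simp
    also have "\<dots> \<le> (\<Prod>i<m. norm (rt i))" by (intro prod_mono) (auto intro: le)
    also have "\<dots> = norm (poly P 0)"
      unfolding Pm poly_prod by (simp add: prod_norm[symmetric] del: prod_norm)
    finally show ?thesis .
  qed
  ultimately show ?thesis by (auto simp: m_def)
qed



definition pconv :: "(nat \<Rightarrow> complex poly) \<Rightarrow> (nat \<Rightarrow> complex) \<Rightarrow> bool" where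
  "pconv P g \<longleftrightarrow> (\<forall>i. (\<lambda>n. coeff (P n) i) \<longlonglongrightarrow> g i)"

lemma pconv_const: "f \<longlonglongrightarrow> x \<Longrightarrow> pconv (\<lambda>n. [:f n:]) (coeff [:x:])"
  unfolding pconv_def by (auto simp: coeff_pCons split: nat.splits)

lemma pconv_fixed: "pconv (\<lambda>n. p) (coeff p)"
  unfolding pconv_def by auto

lemma pconv_add: "pconv P (coeff p) \<Longrightarrow> pconv Q (coeff q) \<Longrightarrow> pconv (\<lambda>n. P n + Q n) (coeff (p + q))"
  unfolding pconv_def by (auto intro!: tendsto_add)

lemma pconv_diff: "pconv P (coeff p) \<Longrightarrow> pconv Q (coeff q) \<Longrightarrow> pconv (\<lambda>n. P n - Q n) (coeff (p - q))"
  unfolding pconv_def by (auto intro!: tendsto_diff)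

lemma pconv_mult: "pconv P (coeff p) \<Longrightarrow> pconv Q (coeff q) \<Longrightarrow> pconv (\<lambda>n. P n * Q n) (coeff (p * q))"
  unfolding pconv_def coeff_mult by (auto intro!: tendsto_sum tendsto_mult)

lemma pconv_power: "pconv P (coeff p) \<Longrightarrow> pconv (\<lambda>n. P n ^ m) (coeff (p ^ m))"
  by (induction m) (auto intro: pconv_mult pconv_fixed)

lemma pconv_div:
  assumes eq: "\<And>n. G n = [:-r n, 1:] * Q n" and r: "r \<longlonglongrightarrow> 0"
    and deg: "\<And>n. degree (Q n) < D" and g: "pconv G g"
  shows "pconv Q (\<lambda>i. g (Suc i))"
proof -
  have rec: "coeff (Q n) i = coeff (G n) (Suc i) + r n * coeff (Q n) (Suc i)" for n i
    by (simp add: eq mult_pCons_left)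
  have big: "(\<lambda>n. coeff (Q n) i) \<longlonglongrightarrow> g (Suc i)" if "D \<le> i" for i
  proof -
    have "coeff (Q n) i = coeff (G n) (Suc i)" for n
      using rec[of n i] deg[of n] that by (simp add: coeff_eq_0)
    thus ?thesis using g unfolding pconv_def by simp
  qed
  have "(\<lambda>n. coeff (Q n) i) \<longlonglongrightarrow> g (Suc i)" for i
  proof (cases "D \<le> i")
    case True thus ?thesis by (rule big)
  next
    case False
    hence "i \<le> D" by simp
    thus ?thesis
    proof (induction i rule: inc_induct)
      case base thus ?case by (rule big) simp
    next
      case (step m)
      have gm: "(\<lambda>n. coeff (G n) (Suc m)) \<longlonglongrightarrow> g (Suc m)" using g unfolding pconv_def by blast
      have "(\<lambda>n. coeff (G n) (Suc m) + r n * coeff (Q n) (Suc m)) \<longlonglongrightarrow> g (Suc m) + 0 * g (Suc (Suc m))"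
        by (intro tendsto_add tendsto_mult gm step.IH r)
      moreover have "(\<lambda>n. coeff (Q n) m) = (\<lambda>n. coeff (G n) (Suc m) + r n * coeff (Q n) (Suc m))"
        by (rule ext) (rule rec)
      ultimately show ?case by simp
    qed
  qed
  thus ?thesis unfolding pconv_def by (intro allI)
qed


lemma bigo_poly_coeff:
  fixes P :: "complex poly"
  assumes "(\<lambda>w. poly P w) \<in> O[at 0](\<lambda>w. w ^ n)" "i < n"
  shows "coeff P i = 0"
  using assms
proof (induction n arbitrary: P i)
  case 0 from 0(2) show ?case by simp
next
  case (Suc n)
  obtain a Q where PQ: "P = pCons a Q" by (metis pCons_cases)
  have "\<exists>C>0. eventually (\<lambda>w. norm (poly P w) \<le> C * norm (w ^ Suc n)) (at 0)"
    using Suc.prems(1) by (elim landau_o.bigE) auto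
  then obtain C where C: "C > 0"
    "eventually (\<lambda>w. norm (poly P w) \<le> C * norm (w ^ Suc n)) (at 0)" by blast
  have a0: "a = 0"
  proof -
    have l1: "((\<lambda>w. norm (poly P w)) \<longlongrightarrow> norm (poly P 0)) (at 0)"
      using poly_isCont[where p=P and x=0] unfolding isCont_def by (rule tendsto_norm)
    have l2: "((\<lambda>w::complex. C * norm (w ^ Suc n)) \<longlongrightarrow> C * norm ((0::complex) ^ Suc n)) (at 0)"
      by (intro tendsto_intros)
    have "norm (poly P 0) \<le> C * norm ((0::complex) ^ Suc n)"
      by (rule tendsto_le[OF trivial_limit_at l2 l1 C(2)])
    thus ?thesis by (simp add: PQ)
  qed
  have "eventually (\<lambda>w. norm (poly Q w) \<le> C * norm (w ^ n)) (at 0)"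
  proof -
    have "eventually (\<lambda>w. w \<noteq> 0) (at (0::complex))" by (rule eventually_neq_at_within)
    with C(2) show ?thesis
    proof eventually_elim
      case (elim w)
      hence "norm w * norm (poly Q w) \<le> norm w * (C * norm (w ^ n))"
        using elim(1) by (simp add: PQ a0 norm_mult norm_power)
      thus ?case using elim(2) by (simp add: mult_le_cancel_left_pos)
    qed
  qed
  hence Qo: "(\<lambda>w. poly Q w) \<in> O[at 0](\<lambda>w. w ^ n)" by (intro bigoI)
  show ?case
  proof (cases i)
    case 0 thus ?thesis by (simp add: PQ a0)
  next
    case (Suc j) thus ?thesis using Suc.IH[OF Qo, of j] Suc.prems(2) by (simp add: PQ)
  qed
qed



fun Hp :: "nat \<Rightarrow> complex \<Rightarrow> complex \<Rightarrow> nat \<Rightarrow> complex poly" where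
  "Hp d z0 c 0 = [:z0, 1:]"
| "Hp d z0 c (Suc j) = [:c:] + ([:cnj c:] + Hp d z0 c j ^ d) ^ d"

lemma pc_pc: "pc d c (pc d c y) = (y ^ d + cnj c) ^ d + c"
  by (simp add: pc_def)

lemma funpow_2Suc: "(f ^^ (2 * Suc j)) x = f (f ((f ^^ (2 * j)) x))"
proof -
  have "2 * Suc j = Suc (Suc (2 * j))" by simp
  thus ?thesis by (simp only: funpow.simps comp_def)
qed

lemma Hp_poly: "poly (Hp d z0 c j) w = (pc d c ^^ (2 * j)) (z0 + w)"
  by (induction j) (simp_all add: funpow_2Suc pc_pc add.commute)

lemma Hp_poly': "(pc d c ^^ (2 * j)) = (\<lambda>x. poly (Hp d z0 c j) (x - z0))"
  by (rule ext) (simp add: Hp_poly)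

lemma Hp_deg:
  assumes "d \<ge> 2"
  shows "degree (Hp d z0 c j) = d ^ (2 * j) \<and> lead_coeff (Hp d z0 c j) = 1"
proof (induction j)
  case 0 thus ?case by simp
next
  case (Suc j)
  define Y where "Y = Hp d z0 c j"
  have Y: "degree Y = d ^ (2 * j)" "lead_coeff Y = 1" using Suc Y_def by auto
  hence Y0: "Y \<noteq> 0" by auto
  have dpos: "d > 0" using assms by simp
  have e1: "degree Y \<ge> 1" using Y(1) dpos by simp
  have d1: "degree (Y ^ d) = d * degree Y" by (rule degree_power_eq[OF Y0])
  have l1: "lead_coeff (Y ^ d) = 1" by (simp add: lead_coeff_power Y(2))
  have d1pos: "0 < degree (Y ^ d)" using d1 e1 dpos by simp
  define Z where "Z = [:cnj c:] + Y ^ d"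
  have dZ: "degree Z = d * degree Y" unfolding Z_def
    using d1 d1pos by (subst degree_add_eq_right) auto
  have lZ: "lead_coeff Z = 1" unfolding Z_def
    using d1pos by (subst lead_coeff_add_le) (auto simp: l1)
  hence Z0: "Z \<noteq> 0" by auto
  have d2: "degree (Z ^ d) = d * degree Z" by (rule degree_power_eq[OF Z0])
  have l2: "lead_coeff (Z ^ d) = 1" by (simp add: lead_coeff_power lZ)
  have d2pos: "0 < degree (Z ^ d)" using d2 dZ e1 dpos by simp
  have "degree ([:c:] + Z ^ d) = degree (Z ^ d)"
    using d2pos by (subst degree_add_eq_right) auto
  moreover have "lead_coeff ([:c:] + Z ^ d) = 1"
    using d2pos by (subst lead_coeff_add_le) (auto simp: l2)
  moreover have "d * (d * d ^ (2 * j)) = d ^ (2 * Suc j)" by (simp add: power_Suc)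
  ultimately show ?case using d2 dZ Y(1) by (simp add: Y_def Z_def)
qed

lemma pconv_Hp:
  assumes "c \<longlonglongrightarrow> c0"
  shows "pconv (\<lambda>n. Hp d z0 (c n) j) (coeff (Hp d z0 c0 j))"
proof (induction j)
  case 0 show ?case by (simp add: pconv_fixed)
next
  case (Suc j)
  have cc: "(\<lambda>n. cnj (c n)) \<longlonglongrightarrow> cnj c0" using assms by (rule tendsto_cnj)
  show ?case unfolding Hp.simps
    by (intro pconv_add pconv_const pconv_power Suc assms cc)
qed

lemma pc_iter_tendsto:
  assumes "c \<longlonglongrightarrow> c0" "x \<longlonglongrightarrow> x0"
  shows "(\<lambda>n. (pc d (c n) ^^ m) (x n)) \<longlonglongrightarrow> (pc d c0 ^^ m) x0"
proof (induction m)
  case 0 thus ?case using assms(2) by simp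
next
  case (Suc m)
  have "(pc d (c n) ^^ Suc m) (x n) = cnj ((pc d (c n) ^^ m) (x n)) ^ d + c n" for n
    by (simp add: pc_def)
  moreover have "(pc d c0 ^^ Suc m) x0 = cnj ((pc d c0 ^^ m) x0) ^ d + c0"
    by (simp add: pc_def)
  moreover have "(\<lambda>n. cnj ((pc d (c n) ^^ m) (x n)) ^ d + c n) \<longlonglongrightarrow> cnj ((pc d c0 ^^ m) x0) ^ d + c0"
    by (intro tendsto_intros Suc assms(1))
  ultimately show ?case by simp
qed

lemma mult2_poly:
  "mult2 d c k x = poly (pderiv (Hp d z0 c k)) (x - z0)"
proof -
  have "((\<lambda>x. poly (Hp d z0 c k) (x - z0)) has_field_derivative poly (pderiv (Hp d z0 c k)) (x - z0) * 1) (at x)"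
    by (rule DERIV_chain2[OF poly_DERIV]) (auto intro!: derivative_eq_intros)
  moreover have "pc d c ^^ (2 * k) = (\<lambda>x. poly (Hp d z0 c k) (x - z0))" by (rule Hp_poly')
  ultimately show ?thesis unfolding mult2_def by (simp add: DERIV_imp_deriv)
qed

lemma mult2_anti:
  fixes d j k :: nat and z0 c x :: complex
  assumes k: "k = Suc (2 * j)"
  defines "hp \<equiv> Hp d z0 c j ^ d + [:cnj c:]"
  shows "mult2 d c k x = cnj (poly (pderiv hp) ((pc d c ^^ k) x - z0)) * poly (pderiv hp) (x - z0)"
proof -
  define h where "h = (\<lambda>y. poly hp (y - z0))"
  define h' where "h' = (\<lambda>y. poly (pderiv hp) (y - z0))"
  have g: "(pc d c ^^ k) y = cnj (h y)" for y
  proof -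
    have "(pc d c ^^ k) y = pc d c ((pc d c ^^ (2 * j)) y)" by (simp add: k)
    also have "\<dots> = cnj (h y)" by (simp add: h_def hp_def Hp_poly pc_def)
    finally show ?thesis .
  qed
  have dh: "(h has_field_derivative h' y) (at y)" for y
  proof -
    have "((\<lambda>y. poly hp (y - z0)) has_field_derivative poly (pderiv hp) (y - z0) * 1) (at y)"
      by (rule DERIV_chain2[OF poly_DERIV]) (auto intro!: derivative_eq_intros)
    thus ?thesis by (simp add: h_def h'_def)
  qed
  have eq: "pc d c ^^ (2 * k) = (cnj \<circ> h \<circ> cnj) \<circ> h"
  proof (rule ext)
    fix y
    have "(pc d c ^^ (2 * k)) y = (pc d c ^^ k) ((pc d c ^^ k) y)"
      by (simp add: mult_2 funpow_add)
    thus "(pc d c ^^ (2 * k)) y = ((cnj \<circ> h \<circ> cnj) \<circ> h) y" by (simp add: g)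
  qed
  have "(((cnj \<circ> h \<circ> cnj) \<circ> h) has_field_derivative cnj (h' (cnj (h x))) * h' x) (at x)"
    by (rule DERIV_chain[OF has_field_derivative_cnj_cnj[OF dh] dh])
  hence "mult2 d c k x = cnj (h' (cnj (h x))) * h' x"
    unfolding mult2_def eq by (rule DERIV_imp_deriv)
  thus ?thesis by (simp add: h'_def g)
qed



lemma root_seq:
  fixes G :: "nat \<Rightarrow> complex poly"
  assumes lc: "\<And>n. lead_coeff (G n) = 1" and dg: "\<And>n. degree (G n) = m" and m: "m \<ge> 1"
    and c0: "(\<lambda>n. coeff (G n) 0) \<longlonglongrightarrow> 0"
  shows "\<exists>r Q. r \<longlonglongrightarrow> 0 \<and> (\<forall>n. G n = [:-r n, 1:] * Q n \<and> lead_coeff (Q n) = 1 \<and> degree (Q n) = m - 1)"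
proof -
  have ex: "\<exists>rq. norm (fst rq) ^ m \<le> norm (coeff (G n) 0) \<and> G n = [:-fst rq, 1:] * snd rq" for n
  proof -
    obtain r where r: "poly (G n) r = 0" "norm r ^ degree (G n) \<le> norm (poly (G n) 0)"
      using root_small[of "G n"] lc dg m by auto
    from r(1) have "[:-r, 1:] dvd G n" by (simp add: poly_eq_0_iff_dvd)
    then obtain Q where "G n = [:-r, 1:] * Q" by (elim dvdE)
    thus ?thesis using r(2) dg[of n] by (intro exI[of _ "(r, Q)"]) (simp add: poly_0_coeff_0)
  qed
  then obtain rq where rq: "\<And>n. norm (fst (rq n)) ^ m \<le> norm (coeff (G n) 0) \<and> G n = [:-fst (rq n), 1:] * snd (rq n)"
  proof -
    have "\<forall>n. \<exists>rq. norm (fst rq) ^ m \<le> norm (coeff (G n) 0) \<and> G n = [:-fst rq, 1:] * snd rq" using ex by blast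
    from choice[OF this] show ?thesis using that by blast
  qed
  define r where "r = (\<lambda>n. fst (rq n))"
  define Q where "Q = (\<lambda>n. snd (rq n))"
  have mpos: "0 < m" using m by simp
  have rle: "norm (r n) \<le> root m (norm (coeff (G n) 0))" for n
  proof -
    have h: "norm (r n) ^ m \<le> norm (coeff (G n) 0)" using rq[of n] r_def by blast
    have "norm (r n) = root m (norm (r n) ^ m)" using mpos by (simp add: real_root_power_cancel)
    also have "\<dots> \<le> root m (norm (coeff (G n) 0))" using h mpos by simp
    finally show ?thesis .
  qed
  have "(\<lambda>n. root m (norm (coeff (G n) 0))) \<longlonglongrightarrow> root m (norm (0::complex))"
    by (intro tendsto_intros c0)
  hence lim0: "(\<lambda>n. root m (norm (coeff (G n) 0))) \<longlonglongrightarrow> 0" by simp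
  have "\<forall>n. norm (r n) \<le> root m (norm (coeff (G n) 0))" using rle by blast
  from Lim_null_comparison[OF always_eventually[OF this] lim0] have rt: "r \<longlonglongrightarrow> 0" .
  have "G n = [:-r n, 1:] * Q n \<and> lead_coeff (Q n) = 1 \<and> degree (Q n) = m - 1" for n
  proof -
    have eq: "G n = [:-r n, 1:] * Q n" using rq[of n] by (simp add: r_def Q_def)
    have G0: "G n \<noteq> 0" using lc[of n] by auto
    hence Q0: "Q n \<noteq> 0" using eq by auto
    have "lead_coeff (G n) = lead_coeff ([:-r n, 1:] * Q n)" using eq by (rule arg_cong)
    also have "\<dots> = lead_coeff [:-r n, 1:] * lead_coeff (Q n)" by (rule lead_coeff_mult)
    finally have "lead_coeff (G n) = lead_coeff [:-r n, 1:] * lead_coeff (Q n)" .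
    hence "lead_coeff (Q n) = 1" using lc[of n] by simp
    moreover have "degree (G n) = degree [:-r n, 1:] + degree (Q n)"
    proof -
      have "degree (G n) = degree ([:-r n, 1:] * Q n)" using eq by (rule arg_cong)
      also have "\<dots> = degree [:-r n, 1:] + degree (Q n)" by (rule degree_mult_eq) (use Q0 in auto)
      finally show ?thesis .
    qed
    hence "degree (G n) = 1 + degree (Q n)" by simp
    ultimately show ?thesis using eq dg[of n] by simp
  qed
  with rt show ?thesis by blast
qed

lemma poly_sum_lt:
  fixes p :: "complex poly"
  assumes "degree p < D"
  shows "poly p x = (\<Sum>i<D. coeff p i * x ^ i)"
proof -
  have "poly p x = (\<Sum>i\<le>degree p. coeff p i * x ^ i)" by (rule poly_altdef)
  also have "\<dots> = (\<Sum>i<D. coeff p i * x ^ i)"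
    using assms by (intro sum.mono_neutral_left) (auto simp: coeff_eq_0)
  finally show ?thesis .
qed


lemma factor_seq:
  fixes G :: "nat \<Rightarrow> complex poly" and g :: "nat \<Rightarrow> complex"
  assumes lc: "\<And>n. lead_coeff (G n) = 1" and dg: "\<And>n. degree (G n) = N" and N: "N \<ge> 2"
    and pc: "pconv G g" and g0: "g 0 = 0" and g1: "g 1 = 0" and a: "g 2 = a" "a \<noteq> 0"
  shows "\<exists>r1 r2 U \<delta> L K. r1 \<longlonglongrightarrow> 0 \<and> r2 \<longlonglongrightarrow> 0 \<and> \<delta> > 0 \<and> L \<ge> 0 \<and>
     (\<forall>n. G n = [:-r1 n, 1:] * [:-r2 n, 1:] * U n) \<and>
     eventually (\<lambda>n. \<forall>w. norm w \<le> \<delta> \<longrightarrow> norm a / 2 \<le> norm (poly (U n) w) \<and> norm (poly (U n) w) \<le> K) sequentially \<and>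
     eventually (\<lambda>n. \<forall>w w'. norm w \<le> \<delta> \<longrightarrow> norm w' \<le> \<delta> \<longrightarrow>
        norm (poly (U n) w - poly (U n) w') \<le> L * norm (w - w')) sequentially"
proof -
  have c0': "(\<lambda>n. coeff (G n) 0) \<longlonglongrightarrow> g 0" using pc unfolding pconv_def by blast
  have c0: "(\<lambda>n. coeff (G n) 0) \<longlonglongrightarrow> 0" using c0' unfolding g0 .
  have N1': "1 \<le> N" using N by simp
  obtain r1 Q where r1: "r1 \<longlonglongrightarrow> 0" and Q: "\<And>n. G n = [:-r1 n, 1:] * Q n \<and> lead_coeff (Q n) = 1 \<and> degree (Q n) = N - 1"
    using root_seq[OF lc dg N1' c0] by blast
  have pQ: "pconv Q (\<lambda>i. g (Suc i))"
    by (rule pconv_div[where D = N]) (use Q r1 pc N in auto)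
  have c1': "(\<lambda>n. coeff (Q n) 0) \<longlonglongrightarrow> g (Suc 0)" using pQ unfolding pconv_def by blast
  have c1: "(\<lambda>n. coeff (Q n) 0) \<longlonglongrightarrow> 0" using c1' g1 by simp
  obtain r2 U where r2: "r2 \<longlonglongrightarrow> 0" and U: "\<And>n. Q n = [:-r2 n, 1:] * U n \<and> lead_coeff (U n) = 1 \<and> degree (U n) = N - 1 - 1"
  proof -
    have QQ: "lead_coeff (Q n) = 1" "degree (Q n) = N - 1" for n using Q[of n] by blast+
    have N1: "N - 1 \<ge> 1" using N by simp
    from root_seq[of Q "N - 1", OF QQ N1 c1] obtain r2 U where "r2 \<longlonglongrightarrow> 0"
      "\<forall>n. Q n = [:-r2 n, 1:] * U n \<and> lead_coeff (U n) = 1 \<and> degree (U n) = N - 1 - 1" by blast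
    thus ?thesis using that by blast
  qed
  have pU: "pconv U (\<lambda>i. g (Suc (Suc i)))"
    by (rule pconv_div[where D = N, OF _ r2 _ pQ]) (use U N in auto)
  have fac: "G n = [:-r1 n, 1:] * [:-r2 n, 1:] * U n" for n
  proof -
    have "G n = [:-r1 n, 1:] * Q n" using Q[of n] by blast
    moreover have "Q n = [:-r2 n, 1:] * U n" using U[of n] by blast
    ultimately show ?thesis by (metis mult.assoc)
  qed
  have dU: "degree (U n) < N" for n using U[of n] N by simp
  define B where "B = (\<Sum>i<N. norm (g (Suc (Suc i))) + 1)"
  define L where "L = real N * B"
  have B0: "B \<ge> 0" unfolding B_def by (intro sum_nonneg) auto
  have L0: "L \<ge> 0" unfolding L_def using B0 by simp
  have evc: "eventually (\<lambda>n. \<forall>i\<in>{..<N}. norm (coeff (U n) i) \<le> norm (g (Suc (Suc i))) + 1) sequentially"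
  proof (rule eventually_ball_finite, simp, intro ballI)
    fix i
    have "(\<lambda>n. coeff (U n) i) \<longlonglongrightarrow> g (Suc (Suc i))" using pU unfolding pconv_def by blast
    hence "(\<lambda>n. norm (coeff (U n) i)) \<longlonglongrightarrow> norm (g (Suc (Suc i)))" by (rule tendsto_norm)
    hence "eventually (\<lambda>n. norm (coeff (U n) i) < norm (g (Suc (Suc i))) + 1) sequentially"
      by (rule order_tendstoD) simp
    thus "eventually (\<lambda>n. norm (coeff (U n) i) \<le> norm (g (Suc (Suc i))) + 1) sequentially"
      by eventually_elim simp
  qed
  have eva: "eventually (\<lambda>n. norm (coeff (U n) 0 - a) < norm a / 4) sequentially"
  proof -
    have "(\<lambda>n. coeff (U n) 0) \<longlonglongrightarrow> g (Suc (Suc 0))" using pU unfolding pconv_def by blast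
    hence "(\<lambda>n. coeff (U n) 0) \<longlonglongrightarrow> a" using a(1) by (simp add: numeral_2_eq_2)
    hence "(\<lambda>n. coeff (U n) 0 - a) \<longlonglongrightarrow> 0" by (simp add: LIM_zero)
    hence "(\<lambda>n. norm (coeff (U n) 0 - a)) \<longlonglongrightarrow> 0" by (simp add: tendsto_norm_zero)
    thus ?thesis by (rule order_tendstoD) (use a in simp)
  qed
  define \<delta> where "\<delta> = min 1 (norm a / (4 * (L + 1)))"
  have \<delta>0: "\<delta> > 0" unfolding \<delta>_def using a L0 by simp
  have \<delta>1: "\<delta> \<le> 1" unfolding \<delta>_def by simp
  have \<delta>L: "L * \<delta> \<le> norm a / 4"
  proof -
    have "L * \<delta> \<le> (L + 1) * (norm a / (4 * (L + 1)))"
      using L0 \<delta>0 by (intro mult_mono) (auto simp: \<delta>_def)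
    also have "\<dots> = norm a / 4" using L0 by (simp add: field_simps)
    finally show ?thesis .
  qed
  have key: "(\<forall>w. norm w \<le> \<delta> \<longrightarrow> norm a / 2 \<le> norm (poly (U n) w) \<and> norm (poly (U n) w) \<le> B) \<and>
      (\<forall>w w'. norm w \<le> \<delta> \<longrightarrow> norm w' \<le> \<delta> \<longrightarrow> norm (poly (U n) w - poly (U n) w') \<le> L * norm (w - w'))"
    if cb: "\<forall>i\<in>{..<N}. norm (coeff (U n) i) \<le> norm (g (Suc (Suc i))) + 1"
      and ca: "norm (coeff (U n) 0 - a) < norm a / 4" for n
  proof -
    have sumB: "(\<Sum>i<N. norm (coeff (U n) i)) \<le> B" unfolding B_def using cb by (intro sum_mono) auto
    have lip: "norm (poly (U n) w - poly (U n) w') \<le> L * norm (w - w')"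
      if "norm w \<le> 1" "norm w' \<le> 1" for w w'
    proof -
      have "poly (U n) w - poly (U n) w' = (\<Sum>i<N. coeff (U n) i * (w ^ i - w' ^ i))"
        by (simp add: poly_sum_lt[OF dU] sum_subtractf[symmetric] right_diff_distrib)
      also have "norm \<dots> \<le> (\<Sum>i<N. norm (coeff (U n) i) * (real N * norm (w - w')))"
      proof (rule order_trans[OF norm_sum], rule sum_mono)
        fix i assume i: "i \<in> {..<N}"
        have "norm (w ^ i - w' ^ i) \<le> real i * norm (w - w')" by (rule norm_power_diff) (use that in auto)
        also have "\<dots> \<le> real N * norm (w - w')" using i by (intro mult_right_mono) auto
        finally show "norm (coeff (U n) i * (w ^ i - w' ^ i)) \<le> norm (coeff (U n) i) * (real N * norm (w - w'))"
          by (simp add: norm_mult mult_left_mono)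
      qed
      also have "\<dots> = (\<Sum>i<N. norm (coeff (U n) i)) * (real N * norm (w - w'))"
        by (simp add: sum_distrib_right)
      also have "\<dots> \<le> B * (real N * norm (w - w'))" by (intro mult_right_mono sumB) auto
      also have "\<dots> = L * norm (w - w')" by (simp add: L_def)
      finally show ?thesis .
    qed
    have up: "norm (poly (U n) w) \<le> B" if "norm w \<le> 1" for w
    proof -
      have "norm (poly (U n) w) \<le> (\<Sum>i<N. norm (coeff (U n) i * w ^ i))"
        unfolding poly_sum_lt[OF dU] by (rule norm_sum)
      also have "\<dots> \<le> (\<Sum>i<N. norm (coeff (U n) i))"
      proof (rule sum_mono)
        fix i
        have "norm (w ^ i) \<le> 1" using that by (simp add: norm_power power_le_one)
        thus "norm (coeff (U n) i * w ^ i) \<le> norm (coeff (U n) i)"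
          by (simp add: norm_mult mult_left_le)
      qed
      also have "\<dots> \<le> B" by (rule sumB)
      finally show ?thesis .
    qed
    have low: "norm a / 2 \<le> norm (poly (U n) w)" if "norm w \<le> \<delta>" for w
    proof -
      have "norm (poly (U n) w - poly (U n) 0) \<le> L * norm (w - 0)"
        using that \<delta>1 by (intro lip) auto
      also have "\<dots> \<le> L * \<delta>" using that L0 by (simp add: mult_left_mono)
      finally have h1: "norm (poly (U n) w - coeff (U n) 0) \<le> norm a / 4"
        using \<delta>L by (simp add: poly_0_coeff_0)
      define P where "P = poly (U n) w"
      define Dd where "Dd = P - coeff (U n) 0"
      define Ee where "Ee = coeff (U n) 0 - a"
      have t1: "norm ((P - Dd) - Ee) \<le> norm (P - Dd) + norm Ee" by (rule norm_triangle_ineq4)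
      have t2: "norm (P - Dd) \<le> norm P + norm Dd" by (rule norm_triangle_ineq4)
      have t3: "(P - Dd) - Ee = a" by (simp add: Dd_def Ee_def)
      have "norm a \<le> norm (poly (U n) w) + norm (poly (U n) w - coeff (U n) 0) + norm (coeff (U n) 0 - a)"
        using t1 t2 unfolding t3 by (simp add: P_def Dd_def Ee_def)
      thus ?thesis using h1 ca by linarith
    qed
    show ?thesis
    proof (intro conjI allI impI)
      fix w :: complex assume w: "norm w \<le> \<delta>"
      show "norm a / 2 \<le> norm (poly (U n) w)" using low w .
      show "norm (poly (U n) w) \<le> B" using up w \<delta>1 by simp
    next
      fix w w' :: complex assume w: "norm w \<le> \<delta>" "norm w' \<le> \<delta>"
      show "norm (poly (U n) w - poly (U n) w') \<le> L * norm (w - w')" using lip w \<delta>1 by simp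
    qed
  qed
  have "eventually (\<lambda>n. (\<forall>w. norm w \<le> \<delta> \<longrightarrow> norm a / 2 \<le> norm (poly (U n) w) \<and> norm (poly (U n) w) \<le> B) \<and>
      (\<forall>w w'. norm w \<le> \<delta> \<longrightarrow> norm w' \<le> \<delta> \<longrightarrow> norm (poly (U n) w - poly (U n) w') \<le> L * norm (w - w'))) sequentially"
    using evc eva by eventually_elim (rule key)
  hence "eventually (\<lambda>n. \<forall>w. norm w \<le> \<delta> \<longrightarrow> norm a / 2 \<le> norm (poly (U n) w) \<and> norm (poly (U n) w) \<le> B) sequentially"
    "eventually (\<lambda>n. \<forall>w w'. norm w \<le> \<delta> \<longrightarrow> norm w' \<le> \<delta> \<longrightarrow> norm (poly (U n) w - poly (U n) w') \<le> L * norm (w - w')) sequentially"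
    by (auto elim: eventually_mono)
  thus ?thesis using r1 r2 \<delta>0 L0 fac by blast
qed



lemma opp_sign:
  fixes t1 t2 M :: real
  assumes "t1 \<noteq> 0" "t2 \<noteq> 0" "\<bar>t1\<bar> < 1/M" "\<bar>t2\<bar> < 1/M" "M > 0" "\<bar>1/t1 + 1/t2\<bar> < M"
  shows "(t1 < 0 \<and> 0 < t2) \<or> (0 < t1 \<and> t2 < 0)"
proof -
  have i1: "M < 1 / \<bar>t1\<bar>" using assms(1,3,5) by (simp add: field_simps)
  have i2: "M < 1 / \<bar>t2\<bar>" using assms(2,4,5) by (simp add: field_simps)
  show ?thesis
  proof (rule ccontr)
    assume "\<not> ?thesis"
    hence "(0 < t1 \<and> 0 < t2) \<or> (t1 < 0 \<and> t2 < 0)" using assms(1,2) by linarith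
    thus False
    proof
      assume h: "0 < t1 \<and> 0 < t2"
      have "1/t1 > M" using i1 h by simp
      moreover have "1/t2 > 0" using h by simp
      ultimately have "1/t1 + 1/t2 > M" by linarith
      thus False using assms(6) by linarith
    next
      assume h: "t1 < 0 \<and> t2 < 0"
      have e1: "1/t1 = - (1/\<bar>t1\<bar>)" "1/t2 = - (1/\<bar>t2\<bar>)" using h by auto
      have "1/\<bar>t2\<bar> > 0" using h by simp
      hence "1/t1 + 1/t2 < - M" unfolding e1 using i1 by linarith
      thus False using assms(6) by linarith
    qed
  qed
qed

lemma inv_conj_sum:
  fixes X :: complex
  assumes "X \<noteq> 0"
  shows "1/X + 1/cnj X = of_real (2 * Re X / (norm X)^2)"
proof -
  have "cnj X \<noteq> 0" using assms by simp
  hence "1/X + 1/cnj X = (X + cnj X) / (X * cnj X)" using assms by (simp add: field_simps)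
  also have "X + cnj X = of_real (2 * Re X)" by (simp add: complex_add_cnj)
  also have "X * cnj X = of_real ((norm X)^2)" by (simp add: complex_mult_cnj cmod_def)
  finally show ?thesis by simp
qed

lemma cplx_bound:
  fixes X :: complex and M :: real
  assumes X0: "X \<noteq> 0" and Xs: "norm X < 1/M" and M: "M > 0" and I: "norm (1/X + 1/cnj X) < M"
  shows "X \<notin> \<real> \<and> \<bar>Re X\<bar> \<le> M * (Im X)^2"
proof -
  have n0: "norm X > 0" using X0 by simp
  have "norm (1/X + 1/cnj X) = \<bar>2 * Re X\<bar> / (norm X)^2"
    unfolding inv_conj_sum[OF X0] norm_of_real by (simp add: abs_divide)
  hence h: "2 * \<bar>Re X\<bar> < M * (norm X)^2" using I n0 by (simp add: divide_less_eq abs_mult)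
  have nsq: "(norm X)^2 = (Re X)^2 + (Im X)^2" by (simp add: cmod_power2)
  have re_le: "\<bar>Re X\<bar> \<le> norm X" by (rule abs_Re_le_cmod)
  have MX: "M * norm X < 1" using Xs M by (simp add: field_simps)
  have t: "M * (Re X)^2 \<le> \<bar>Re X\<bar>"
  proof -
    have "M * (Re X)^2 = (M * \<bar>Re X\<bar>) * \<bar>Re X\<bar>" by (simp add: power2_eq_square abs_mult_self)
    also have "\<dots> \<le> 1 * \<bar>Re X\<bar>"
      using MX re_le M by (intro mult_right_mono) (auto intro: order_trans[OF mult_left_mono[OF re_le]] less_imp_le)
    finally show ?thesis by simp
  qed
  have bound: "\<bar>Re X\<bar> \<le> M * (Im X)^2"
    using h t nsq by (simp add: algebra_simps)
  have "X \<notin> \<real>"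
  proof
    assume "X \<in> \<real>"
    hence "Im X = 0" by (simp add: complex_is_Real_iff)
    hence "\<bar>Re X\<bar> \<le> 0" using bound by simp
    hence "Re X = 0" by simp
    with \<open>Im X = 0\<close> have "X = 0" by (simp add: complex_eq_iff)
    thus False using X0 by simp
  qed
  with bound show ?thesis by blast
qed



lemma funpow_comm: "(f ^^ m) ((f ^^ n) u) = (f ^^ n) ((f ^^ m) u)"
proof -
  have "(f ^^ m) ((f ^^ n) u) = (f ^^ (m + n)) u" by (simp add: funpow_add)
  also have "\<dots> = (f ^^ (n + m)) u" by (simp add: add.commute)
  also have "\<dots> = (f ^^ n) ((f ^^ m) u)" by (simp add: funpow_add)
  finally show ?thesis .
qed

lemma rho_formula:
  fixes d k :: nat and z0 c r1 r2 :: complex and U :: "complex poly"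
  assumes fac: "Hp d z0 c k - [:z0, 1:] = [:-r1, 1:] * [:-r2, 1:] * U"
  shows "mult2 d c k (z0 + r1) = 1 + (r1 - r2) * poly U r1 \<and> mult2 d c k (z0 + r2) = 1 + (r2 - r1) * poly U r2"
proof -
  define G where "G = Hp d z0 c k - [:z0, 1:]"
  have mG: "mult2 d c k (z0 + w) = 1 + poly (pderiv G) w" for w
    using mult2_poly[of d c k "z0 + w" z0] by (simp add: G_def pderiv_diff pderiv_pCons)
  have d1: "poly (pderiv G) r1 = (r1 - r2) * poly U r1"
  proof -
    have "G = [:-r1, 1:] * ([:-r2, 1:] * U)" using fac by (simp only: G_def mult.assoc)
    hence "pderiv G = [:-r1, 1:] * pderiv ([:-r2, 1:] * U) + ([:-r2, 1:] * U) * pderiv [:-r1, 1:]"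
      by (simp only: pderiv_mult)
    hence "poly (pderiv G) r1 = poly ([:-r1, 1:] * pderiv ([:-r2, 1:] * U) + ([:-r2, 1:] * U) * pderiv [:-r1, 1:]) r1"
      by (rule arg_cong)
    also have "\<dots> = (r1 - r2) * poly U r1" by (simp add: pderiv_pCons algebra_simps)
    finally show ?thesis .
  qed
  have d2: "poly (pderiv G) r2 = (r2 - r1) * poly U r2"
  proof -
    have "G = [:-r2, 1:] * ([:-r1, 1:] * U)" using fac by (simp only: G_def mult.assoc mult.left_commute)
    hence "pderiv G = [:-r2, 1:] * pderiv ([:-r1, 1:] * U) + ([:-r1, 1:] * U) * pderiv [:-r2, 1:]"
      by (simp only: pderiv_mult)
    hence "poly (pderiv G) r2 = poly ([:-r2, 1:] * pderiv ([:-r1, 1:] * U) + ([:-r1, 1:] * U) * pderiv [:-r2, 1:]) r2"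
      by (rule arg_cong)
    also have "\<dots> = (r2 - r1) * poly U r2" by (simp add: pderiv_pCons algebra_simps)
    finally show ?thesis .
  qed
  show ?thesis using mG d1 d2 by simp
qed

lemma pointwise:
  fixes d j k :: nat and z0 c r1 r2 a :: complex and U :: "complex poly" and \<delta> L M :: real
  assumes k: "k = Suc (2 * j)"
    and fac: "Hp d z0 c k - [:z0, 1:] = [:-r1, 1:] * [:-r2, 1:] * U"
    and r1: "norm r1 < \<delta>" and r2: "norm r2 < \<delta>"
    and low: "\<forall>w. norm w \<le> \<delta> \<longrightarrow> norm a / 2 \<le> norm (poly U w)" and a: "a \<noteq> 0"
    and lip: "\<forall>w w'. norm w \<le> \<delta> \<longrightarrow> norm w' \<le> \<delta> \<longrightarrow> norm (poly U w - poly U w') \<le> L * norm (w - w')"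
    and L0: "L \<ge> 0" and M: "L / (norm a / 2)^2 < M"
    and s1: "norm ((r1 - r2) * poly U r1) < 1/M" and s2: "norm ((r2 - r1) * poly U r2) < 1/M"
    and g1: "norm ((pc d c ^^ k) (z0 + r1) - z0) < \<delta>" and g2: "norm ((pc d c ^^ k) (z0 + r2) - z0) < \<delta>"
    and per1: "\<forall>i. 0 < i \<and> i < 2 * k \<and> i \<noteq> k \<longrightarrow> (pc d c ^^ i) (z0 + r1) \<noteq> z0 + r1"
    and per2: "\<forall>i. 0 < i \<and> i < 2 * k \<and> i \<noteq> k \<longrightarrow> (pc d c ^^ i) (z0 + r2) \<noteq> z0 + r2"
  shows "(\<exists>m. has_period (pc d c) m (z0 + r1)) \<and> (\<exists>m. has_period (pc d c) m (z0 + r2)) \<and>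
        ( (has_period (pc d c) k (z0 + r1) \<and> has_period (pc d c) k (z0 + r2) \<and>
           mult2 d c k (z0 + r1) \<in> \<real> \<and> mult2 d c k (z0 + r2) \<in> \<real> \<and>
           ((norm (mult2 d c k (z0 + r1)) < 1 \<and> norm (mult2 d c k (z0 + r2)) > 1) \<or>
            (norm (mult2 d c k (z0 + r1)) > 1 \<and> norm (mult2 d c k (z0 + r2)) < 1)))
        \<or> (z0 + r1 = z0 + r2 \<and> parabolic d c k (z0 + r1))
        \<or> (has_period (pc d c) (2 * k) (z0 + r1) \<and> has_period (pc d c) (2 * k) (z0 + r2) \<and>
           (pc d c ^^ k) (z0 + r1) = z0 + r2 \<and> (pc d c ^^ k) (z0 + r2) = z0 + r1 \<and>
           mult2 d c k (z0 + r2) = cnj (mult2 d c k (z0 + r1)) \<and>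
           mult2 d c k (z0 + r1) \<notin> \<real> \<and>
           \<bar>Re (mult2 d c k (z0 + r1) - 1)\<bar> \<le> M * (Im (mult2 d c k (z0 + r1)))\<^sup>2))"
proof -
  define G where "G = Hp d z0 c k - [:z0, 1:]"
  have mG: "mult2 d c k (z0 + w) = 1 + poly (pderiv G) w" for w
    using mult2_poly[of d c k "z0 + w" z0] by (simp add: G_def pderiv_diff pderiv_pCons)
  have d1: "poly (pderiv G) r1 = (r1 - r2) * poly U r1"
  proof -
    have "G = [:-r1, 1:] * ([:-r2, 1:] * U)" using fac by (simp only: G_def mult.assoc)
    hence "pderiv G = [:-r1, 1:] * pderiv ([:-r2, 1:] * U) + ([:-r2, 1:] * U) * pderiv [:-r1, 1:]"
      by (simp only: pderiv_mult)
    hence "poly (pderiv G) r1 = poly ([:-r1, 1:] * pderiv ([:-r2, 1:] * U) + ([:-r2, 1:] * U) * pderiv [:-r1, 1:]) r1"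
      by (rule arg_cong)
    also have "\<dots> = (r1 - r2) * poly U r1" by (simp add: pderiv_pCons algebra_simps)
    finally show ?thesis .
  qed
  have d2: "poly (pderiv G) r2 = (r2 - r1) * poly U r2"
  proof -
    have "G = [:-r2, 1:] * ([:-r1, 1:] * U)" using fac by (simp only: G_def mult.assoc mult.left_commute)
    hence "pderiv G = [:-r2, 1:] * pderiv ([:-r1, 1:] * U) + ([:-r1, 1:] * U) * pderiv [:-r2, 1:]"
      by (simp only: pderiv_mult)
    hence "poly (pderiv G) r2 = poly ([:-r2, 1:] * pderiv ([:-r1, 1:] * U) + ([:-r1, 1:] * U) * pderiv [:-r2, 1:]) r2"
      by (rule arg_cong)
    also have "\<dots> = (r2 - r1) * poly U r2" by (simp add: pderiv_pCons algebra_simps)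
    finally show ?thesis .
  qed
  have rho1: "mult2 d c k (z0 + r1) = 1 + (r1 - r2) * poly U r1" using mG d1 by simp
  have rho2: "mult2 d c k (z0 + r2) = 1 + (r2 - r1) * poly U r2" using mG d2 by simp
  define p where "p = pc d c"
  define x where "x = z0 + r1"
  define y where "y = z0 + r2"
  have Gpoly: "poly G w = (p ^^ (2 * k)) (z0 + w) - (z0 + w)" for w
    by (simp add: G_def Hp_poly p_def)
  have Gfac: "poly G w = (w - r1) * (w - r2) * poly U w" for w
    using fac by (simp add: G_def[symmetric] algebra_simps)
  have apos: "norm a / 2 > 0" using a by simp
  have Unz: "poly U w \<noteq> 0" if "norm w \<le> \<delta>" for w
    using low that apos by force
  have roots: "w = r1 \<or> w = r2" if "norm w \<le> \<delta>" "poly G w = 0" for w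
    using Gfac[of w] Unz[OF that(1)] that(2) by simp
  have fix1: "(p ^^ (2 * k)) x = x" using Gfac[of r1] Gpoly[of r1] by (simp add: x_def)
  have fix2: "(p ^^ (2 * k)) y = y" using Gfac[of r2] Gpoly[of r2] by (simp add: y_def)
  have gxy: "(p ^^ k) u = x \<or> (p ^^ k) u = y" if "(p ^^ (2 * k)) u = u" "norm ((p ^^ k) u - z0) < \<delta>" for u
  proof -
    have "(p ^^ (2 * k)) ((p ^^ k) u) = (p ^^ k) u"
      using funpow_comm[where f=p and m="2 * k" and n=k and u=u] that(1) by simp
    hence "poly G ((p ^^ k) u - z0) = 0" using Gpoly[of "(p ^^ k) u - z0"] by simp
    hence "(p ^^ k) u - z0 = r1 \<or> (p ^^ k) u - z0 = r2" using roots that(2) by force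
    thus ?thesis by (auto simp: x_def y_def)
  qed
  have kpos: "0 < k" using k by simp
  have per1': "\<forall>i. 0 < i \<and> i < 2 * k \<and> i \<noteq> k \<longrightarrow> (p ^^ i) x \<noteq> x" using per1 by (simp add: p_def x_def)
  have per2': "\<forall>i. 0 < i \<and> i < 2 * k \<and> i \<noteq> k \<longrightarrow> (p ^^ i) y \<noteq> y" using per2 by (simp add: p_def y_def)
  have hpk: "has_period p k u" if "(p ^^ k) u = u" "\<forall>i. 0 < i \<and> i < 2 * k \<and> i \<noteq> k \<longrightarrow> (p ^^ i) u \<noteq> u" for u
    unfolding has_period_def using that kpos by auto
  have hp2k: "has_period p (2 * k) u" if "(p ^^ (2 * k)) u = u" "(p ^^ k) u \<noteq> u"
    "\<forall>i. 0 < i \<and> i < 2 * k \<and> i \<noteq> k \<longrightarrow> (p ^^ i) u \<noteq> u" for u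
    unfolding has_period_def using that kpos by auto
  define hp where "hp = Hp d z0 c j ^ d + [:cnj c:]"
  define H where "H = (\<lambda>v. poly (pderiv hp) (v - z0))"
  have anti: "mult2 d c k u = cnj (H ((p ^^ k) u)) * H u" for u
    using mult2_anti[OF k, of d c u z0] by (simp add: H_def hp_def p_def)
  have Mpos: "M > 0" using M L0 by (smt (verit) divide_nonneg_nonneg zero_le_power2 norm_ge_zero)
  have index: "norm (1 / (1 - mult2 d c k x) + 1 / (1 - mult2 d c k y)) < M" if ne: "r1 \<noteq> r2"
  proof -
    define u1 where "u1 = poly U r1"
    define u2 where "u2 = poly U r2"
    define e where "e = r1 - r2"
    have e0: "e \<noteq> 0" using ne by (simp add: e_def)
    have u1: "norm u1 \<ge> norm a / 2" using low r1 by (simp add: u1_def)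
    have u2: "norm u2 \<ge> norm a / 2" using low r2 by (simp add: u2_def)
    have u10: "u1 \<noteq> 0" using u1 apos by auto
    have u20: "u2 \<noteq> 0" using u2 apos by auto
    have h1: "1 - mult2 d c k x = - (e * u1)" using rho1 by (simp add: x_def e_def u1_def)
    have h2: "1 - mult2 d c k y = e * u2" using rho2 by (simp add: y_def e_def u2_def algebra_simps)
    have eq: "1 / (1 - mult2 d c k x) + 1 / (1 - mult2 d c k y) = (u1 - u2) / (e * (u1 * u2))"
      unfolding h1 h2 using e0 u10 u20 by (simp add: field_simps)
    have num: "norm (u1 - u2) \<le> L * norm e"
      using lip r1 r2 by (simp add: u1_def u2_def e_def)
    have den: "norm (e * (u1 * u2)) \<ge> norm e * (norm a / 2)^2"
    proof -
      have "norm a / 2 * (norm a / 2) \<le> norm u1 * norm u2"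
        by (rule mult_mono) (use u1 u2 apos in auto)
      hence "(norm a / 2)^2 \<le> norm u1 * norm u2" by (simp only: power2_eq_square)
      thus ?thesis by (simp add: norm_mult mult_left_mono)
    qed
    have "norm ((u1 - u2) / (e * (u1 * u2))) = norm (u1 - u2) / norm (e * (u1 * u2))" by (rule norm_divide)
    also have "\<dots> \<le> (L * norm e) / (norm e * (norm a / 2)^2)"
      using num den e0 apos L0 by (intro frac_le) auto
    also have "\<dots> = L / (norm a / 2)^2" using e0 by simp
    finally show ?thesis using eq M by simp
  qed
  show ?thesis
  proof (cases "(p ^^ k) x = x")
    case gx: True
    have gy: "(p ^^ k) y = y"
    proof -
      have "(p ^^ k) y = x \<or> (p ^^ k) y = y" using gxy[OF fix2] g2 by (simp add: p_def y_def)
      moreover have "x = y" if "(p ^^ k) y = x"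
      proof -
        have "(p ^^ (2 * k)) y = (p ^^ k) ((p ^^ k) y)" by (simp add: mult_2 funpow_add)
        thus ?thesis using that gx fix2 by simp
      qed
      ultimately show ?thesis by auto
    qed
    have hx: "has_period p k x" by (rule hpk[OF gx per1'])
    have hy: "has_period p k y" by (rule hpk[OF gy per2'])
    show ?thesis
    proof (cases "r1 = r2")
      case True
      have "mult2 d c k x = 1" using rho1 True by (simp add: x_def)
      hence "parabolic d c k x" using hx k by (simp add: parabolic_def p_def)
      thus ?thesis using True hx hy unfolding p_def x_def y_def by blast
    next
      case ne: False
      define s1 where "s1 = (norm (H x))^2"
      define s2 where "s2 = (norm (H y))^2"
      have m1: "mult2 d c k x = of_real s1" unfolding anti[of x] gx s1_def complex_norm_square by (simp add: mult.commute)
      have m2: "mult2 d c k y = of_real s2" unfolding anti[of y] gy s2_def complex_norm_square by (simp add: mult.commute)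
      have ns1: "norm (1 - complex_of_real s1) = \<bar>1 - s1\<bar>" by (metis norm_of_real of_real_1 of_real_diff)
      have ns2: "norm (1 - complex_of_real s2) = \<bar>1 - s2\<bar>" by (metis norm_of_real of_real_1 of_real_diff)
      have t1: "1 - s1 \<noteq> 0"
      proof
        assume "1 - s1 = 0"
        hence "mult2 d c k x = 1" using m1 by simp
        hence "(r1 - r2) * poly U r1 = 0" using rho1 by (simp add: x_def)
        thus False using ne Unz[of r1] r1 by simp
      qed
      have t2: "1 - s2 \<noteq> 0"
      proof
        assume "1 - s2 = 0"
        hence "mult2 d c k y = 1" using m2 by simp
        hence "(r2 - r1) * poly U r2 = 0" using rho2 by (simp add: y_def)
        thus False using ne Unz[of r2] r2 by simp
      qed
      have a1: "\<bar>1 - s1\<bar> < 1/M"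
      proof -
        have "norm (1 - mult2 d c k x) = norm ((r1 - r2) * poly U r1)" using rho1 by (simp add: x_def)
        thus ?thesis using s1 unfolding m1 ns1 by simp
      qed
      have a2: "\<bar>1 - s2\<bar> < 1/M"
      proof -
        have "norm (1 - mult2 d c k y) = norm ((r2 - r1) * poly U r2)" using rho2 by (simp add: y_def)
        thus ?thesis using s2 unfolding m2 ns2 by simp
      qed
      have a3: "\<bar>1/(1 - s1) + 1/(1 - s2)\<bar> < M"
      proof -
        have "1 / (1 - mult2 d c k x) + 1 / (1 - mult2 d c k y) = of_real (1/(1 - s1) + 1/(1 - s2))"
          using m1 m2 by simp
        thus ?thesis using index[OF ne] by (simp only: norm_of_real)
      qed
      have sg: "(1 - s1 < 0 \<and> 0 < 1 - s2) \<or> (0 < 1 - s1 \<and> 1 - s2 < 0)"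
        by (rule opp_sign[OF t1 t2 a1 a2 Mpos a3])
      have n1: "norm (mult2 d c k x) = s1" unfolding m1 norm_of_real s1_def by simp
      have n2: "norm (mult2 d c k y) = s2" unfolding m2 norm_of_real s2_def by simp
      have "mult2 d c k x \<in> \<real>" "mult2 d c k y \<in> \<real>" using m1 m2 by auto
      thus ?thesis using hx hy sg n1 n2 by (auto simp: p_def x_def y_def)
    qed
  next
    case gx: False
    have gxy': "(p ^^ k) x = y" using gxy[OF fix1] g1 gx by (simp add: p_def x_def)
    have ne: "r1 \<noteq> r2" using gx gxy' by (auto simp: x_def y_def)
    have gy: "(p ^^ k) y = x"
    proof -
      have "(p ^^ (2 * k)) x = (p ^^ k) ((p ^^ k) x)" by (simp add: mult_2 funpow_add)
      thus ?thesis using gxy' fix1 by simp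
    qed
    have gy': "(p ^^ k) y \<noteq> y" using gy ne by (simp add: x_def y_def)
    have hx: "has_period p (2 * k) x" by (rule hp2k[OF fix1 gx per1'])
    have hy: "has_period p (2 * k) y" by (rule hp2k[OF fix2 gy' per2'])
    have conj: "mult2 d c k y = cnj (mult2 d c k x)" using anti[of x] anti[of y] gxy' gy by simp
    define X where "X = 1 - mult2 d c k x"
    have X0: "X \<noteq> 0" using rho1 ne Unz[of r1] r1 by (simp add: X_def x_def)
    have Xs: "norm X < 1/M" using rho1 s1 by (simp add: X_def x_def)
    have cX: "1 - mult2 d c k y = cnj X" using conj by (simp add: X_def)
    have I: "norm (1/X + 1/cnj X) < M" using index[OF ne] cX by (simp add: X_def)
    have cb: "X \<notin> \<real> \<and> \<bar>Re X\<bar> \<le> M * (Im X)^2" by (rule cplx_bound[OF X0 Xs Mpos I])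
    have nr: "mult2 d c k x \<notin> \<real>"
    proof
      assume "mult2 d c k x \<in> \<real>"
      hence "X \<in> \<real>" unfolding X_def by (intro Reals_diff) auto
      thus False using cb by simp
    qed
    have "\<bar>Re (mult2 d c k x - 1)\<bar> \<le> M * (Im (mult2 d c k x))\<^sup>2"
      using cb by (simp add: X_def abs_minus_commute)
    thus ?thesis using hx hy gxy' gy conj nr by (auto simp: p_def x_def y_def)
  qed
qed



theorem lemma3p2:
  fixes d k :: nat and c0 z0 :: complex and c :: "nat \<Rightarrow> complex"
  assumes "d \<ge> 2"
    and "simple_parabolic d c0 k z0"
    and "c \<longlonglongrightarrow> c0" and "\<And>n. c n \<noteq> c0"
  shows "\<exists>z z' :: nat \<Rightarrow> complex.
     z \<longlonglongrightarrow> z0 \<and> z' \<longlonglongrightarrow> z0 \<and>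
     (\<lambda>n. mult2 d (c n) k (z n)) \<longlonglongrightarrow> 1 \<and>
     (\<lambda>n. mult2 d (c n) k (z' n)) \<longlonglongrightarrow> 1 \<and>
     (\<exists>C::real. \<forall>\<^sub>F n in sequentially.
        (\<exists>m. has_period (pc d (c n)) m (z n)) \<and> (\<exists>m. has_period (pc d (c n)) m (z' n)) \<and>
        ( (has_period (pc d (c n)) k (z n) \<and> has_period (pc d (c n)) k (z' n) \<and>
           mult2 d (c n) k (z n) \<in> \<real> \<and> mult2 d (c n) k (z' n) \<in> \<real> \<and>
           ((norm (mult2 d (c n) k (z n)) < 1 \<and> norm (mult2 d (c n) k (z' n)) > 1) \<or>
            (norm (mult2 d (c n) k (z n)) > 1 \<and> norm (mult2 d (c n) k (z' n)) < 1)))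
        \<or> (z n = z' n \<and> parabolic d (c n) k (z n))
        \<or> (has_period (pc d (c n)) (2 * k) (z n) \<and> has_period (pc d (c n)) (2 * k) (z' n) \<and>
           (pc d (c n) ^^ k) (z n) = z' n \<and> (pc d (c n) ^^ k) (z' n) = z n \<and>
           mult2 d (c n) k (z' n) = cnj (mult2 d (c n) k (z n)) \<and>
           mult2 d (c n) k (z n) \<notin> \<real> \<and>
           \<bar>Re (mult2 d (c n) k (z n) - 1)\<bar> \<le> C * (Im (mult2 d (c n) k (z n)))\<^sup>2)))"
proof -
  have par: "parabolic d c0 k z0" using assms(2) unfolding simple_parabolic_def by blast
  obtain a where a: "a \<noteq> 0"
    and ao: "(\<lambda>w. (pc d c0 ^^ (2 * k)) (z0 + w) - (z0 + w + a * w ^ 2)) \<in> O[at 0](\<lambda>w. w ^ 3)"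
    using assms(2) unfolding simple_parabolic_def by blast
  have hp0: "has_period (pc d c0) k z0" "odd k" using par unfolding parabolic_def by blast+
  obtain j where k: "k = Suc (2 * j)" using hp0(2) by (elim oddE) simp
  have kpos: "0 < k" using k by simp
  define G where "G = (\<lambda>c. Hp d z0 c k - [:z0, 1:])"
  define N where "N = d ^ (2 * k)"
  have N2: "N \<ge> 2"
  proof -
    have "d \<le> d ^ (2 * k)" using assms(1) kpos by (intro self_le_power) auto
    thus ?thesis using assms(1) by (simp add: N_def)
  qed
  have Gdl: "degree (G x) = N \<and> lead_coeff (G x) = 1" for x
  proof -
    have H0: "degree (Hp d z0 x k) = d ^ (2 * k) \<and> lead_coeff (Hp d z0 x k) = 1" by (rule Hp_deg[OF assms(1)])
    have H1: "degree (Hp d z0 x k) = N" using conjunct1[OF H0] by (simp add: N_def)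
    have H2: "lead_coeff (Hp d z0 x k) = 1" using H0 by (rule conjunct2)
    note H = H1 H2
    have eq: "G x = - [:z0, 1:] + Hp d z0 x k" by (simp add: G_def)
    have dl: "degree (- [:z0, 1:]) < degree (Hp d z0 x k)" using H N2 by simp
    show ?thesis unfolding eq
      using degree_add_eq_right[OF dl] lead_coeff_add_le[OF dl] H by simp
  qed
  have Gp: "poly (G x) w = (pc d x ^^ (2 * k)) (z0 + w) - (z0 + w)" for x w
    by (simp add: G_def Hp_poly)
  have pG: "pconv (\<lambda>n. G (c n)) (coeff (G c0))"
    unfolding G_def by (rule pconv_diff[OF pconv_Hp[OF assms(3)] pconv_fixed])
  define P where "P = G c0 - [:0, 0, a:]"
  have eqf: "(\<lambda>w. poly P w) = (\<lambda>w. (pc d c0 ^^ (2 * k)) (z0 + w) - (z0 + w + a * w ^ 2))"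
    by (rule ext) (simp add: P_def Gp algebra_simps power2_eq_square)
  have Po: "(\<lambda>w. poly P w) \<in> O[at 0](\<lambda>w. w ^ 3)" unfolding eqf by (rule ao)
  have cP: "coeff P i = 0" if "i < 3" for i by (rule bigo_poly_coeff[OF Po that])
  have g0: "coeff (G c0) 0 = 0" using cP[of 0] by (simp add: P_def)
  have g1: "coeff (G c0) 1 = 0" using cP[of 1] by (simp add: P_def)
  have g2: "coeff (G c0) 2 = a" using cP[of 2] by (simp add: P_def numeral_2_eq_2)
  have lc: "lead_coeff (G (c n)) = 1" for n using Gdl by blast
  have dg: "degree (G (c n)) = N" for n using Gdl by blast
  obtain r1 r2 U \<delta> L K where r1: "r1 \<longlonglongrightarrow> 0" and r2: "r2 \<longlonglongrightarrow> 0" and \<delta>0: "\<delta> > 0" and L0: "L \<ge> 0"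
    and fac: "\<forall>n. G (c n) = [:-r1 n, 1:] * [:-r2 n, 1:] * U n"
    and evU: "eventually (\<lambda>n. \<forall>w. norm w \<le> \<delta> \<longrightarrow> norm a / 2 \<le> norm (poly (U n) w) \<and> norm (poly (U n) w) \<le> K) sequentially"
    and evL: "eventually (\<lambda>n. \<forall>w w'. norm w \<le> \<delta> \<longrightarrow> norm w' \<le> \<delta> \<longrightarrow>
        norm (poly (U n) w - poly (U n) w') \<le> L * norm (w - w')) sequentially"
    using factor_seq[of "\<lambda>n. G (c n)" N "coeff (G c0)" a, OF lc dg N2 pG g0 g1 g2 a] by blast
  define M where "M = L / (norm a / 2)^2 + 1"
  have M: "L / (norm a / 2)^2 < M" by (simp add: M_def)
  have Mpos: "M > 0" unfolding M_def using L0 by (simp add: add_nonneg_pos)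
  define z where "z = (\<lambda>n. z0 + r1 n)"
  define z' where "z' = (\<lambda>n. z0 + r2 n)"
  have zt: "z \<longlonglongrightarrow> z0" using tendsto_add[OF tendsto_const r1, of z0] by (simp add: z_def)
  have zt': "z' \<longlonglongrightarrow> z0" using tendsto_add[OF tendsto_const r2, of z0] by (simp add: z'_def)
  have rho: "mult2 d (c n) k (z n) = 1 + (r1 n - r2 n) * poly (U n) (r1 n) \<and>
             mult2 d (c n) k (z' n) = 1 + (r2 n - r1 n) * poly (U n) (r2 n)" for n
    using rho_formula[of d z0 "c n" k "r1 n" "r2 n" "U n"] fac by (simp add: z_def z'_def G_def)
  have ev1: "eventually (\<lambda>n. norm (r1 n) < \<delta>) sequentially"
    using tendsto_norm[OF r1] \<delta>0 by (auto dest: order_tendstoD)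
  have ev2: "eventually (\<lambda>n. norm (r2 n) < \<delta>) sequentially"
    using tendsto_norm[OF r2] \<delta>0 by (auto dest: order_tendstoD)
  have d12: "(\<lambda>n. norm (r1 n - r2 n) * K) \<longlonglongrightarrow> 0"
    using tendsto_mult[OF tendsto_norm[OF tendsto_diff[OF r1 r2]] tendsto_const[of K]] by simp
  have q1: "(\<lambda>n. (r1 n - r2 n) * poly (U n) (r1 n)) \<longlonglongrightarrow> 0"
  proof (rule Lim_null_comparison[OF _ d12])
    show "eventually (\<lambda>n. norm ((r1 n - r2 n) * poly (U n) (r1 n)) \<le> norm (r1 n - r2 n) * K) sequentially"
      using evU ev1
    proof eventually_elim
      case (elim n)
      hence "norm (poly (U n) (r1 n)) \<le> K" by auto
      thus ?case by (simp add: norm_mult mult_left_mono)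
    qed
  qed
  have d21: "(\<lambda>n. norm (r2 n - r1 n) * K) \<longlonglongrightarrow> 0"
    using tendsto_mult[OF tendsto_norm[OF tendsto_diff[OF r2 r1]] tendsto_const[of K]] by simp
  have q2: "(\<lambda>n. (r2 n - r1 n) * poly (U n) (r2 n)) \<longlonglongrightarrow> 0"
  proof (rule Lim_null_comparison[OF _ d21])
    show "eventually (\<lambda>n. norm ((r2 n - r1 n) * poly (U n) (r2 n)) \<le> norm (r2 n - r1 n) * K) sequentially"
      using evU ev2
    proof eventually_elim
      case (elim n)
      hence "norm (poly (U n) (r2 n)) \<le> K" by auto
      thus ?case by (simp add: norm_mult mult_left_mono)
    qed
  qed
  have m1: "(\<lambda>n. mult2 d (c n) k (z n)) \<longlonglongrightarrow> 1"
  proof -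
    have "(\<lambda>n. 1 + (r1 n - r2 n) * poly (U n) (r1 n)) \<longlonglongrightarrow> 1 + 0" by (intro tendsto_add tendsto_const q1)
    thus ?thesis using rho by simp
  qed
  have m2: "(\<lambda>n. mult2 d (c n) k (z' n)) \<longlonglongrightarrow> 1"
  proof -
    have "(\<lambda>n. 1 + (r2 n - r1 n) * poly (U n) (r2 n)) \<longlonglongrightarrow> 1 + 0" by (intro tendsto_add tendsto_const q2)
    thus ?thesis using rho by simp
  qed
  have iM: "0 < 1 / M" using Mpos by simp
  have ev5: "eventually (\<lambda>n. norm ((r1 n - r2 n) * poly (U n) (r1 n)) < 1 / M) sequentially"
    using order_tendstoD(2)[OF tendsto_norm_zero[OF q1] iM] by simp
  have ev6: "eventually (\<lambda>n. norm ((r2 n - r1 n) * poly (U n) (r2 n)) < 1 / M) sequentially"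
    using order_tendstoD(2)[OF tendsto_norm_zero[OF q2] iM] by simp
  have gk0: "(pc d c0 ^^ k) z0 = z0" using hp0(1) unfolding has_period_def by blast
  have evg: "eventually (\<lambda>n. norm ((pc d (c n) ^^ k) (x n) - z0) < \<delta>) sequentially"
    if "x \<longlonglongrightarrow> z0" for x
  proof -
    have "(\<lambda>n. (pc d (c n) ^^ k) (x n) - z0) \<longlonglongrightarrow> (pc d c0 ^^ k) z0 - z0"
      by (intro tendsto_diff tendsto_const pc_iter_tendsto[OF assms(3) that])
    hence "(\<lambda>n. norm ((pc d (c n) ^^ k) (x n) - z0)) \<longlonglongrightarrow> 0" using gk0 tendsto_norm_zero by force
    thus ?thesis using \<delta>0 by (auto dest: order_tendstoD)
  qed
  define I where "I = {i. 0 < i \<and> i < 2 * k \<and> i \<noteq> k}"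
  have finI: "finite I" unfolding I_def by simp
  have nz0: "(pc d c0 ^^ i) z0 \<noteq> z0" if "i \<in> I" for i
  proof (cases "i < k")
    case True thus ?thesis using hp0(1) that unfolding has_period_def I_def by blast
  next
    case False
    hence ik: "k < i" "i - k < k" "0 < i - k" using that unfolding I_def by auto
    have "(pc d c0 ^^ i) z0 = (pc d c0 ^^ (i - k)) ((pc d c0 ^^ k) z0)"
      using ik by (metis funpow_add comp_apply le_add_diff_inverse2 less_imp_le)
    also have "\<dots> = (pc d c0 ^^ (i - k)) z0" by (simp add: gk0)
    finally show ?thesis using hp0(1) ik unfolding has_period_def by auto
  qed
  have evp: "eventually (\<lambda>n. \<forall>i. 0 < i \<and> i < 2 * k \<and> i \<noteq> k \<longrightarrow> (pc d (c n) ^^ i) (x n) \<noteq> x n) sequentially"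
    if "x \<longlonglongrightarrow> z0" for x
  proof -
    have "eventually (\<lambda>n. \<forall>i\<in>I. (pc d (c n) ^^ i) (x n) - x n \<noteq> 0) sequentially"
    proof (rule eventually_ball_finite[OF finI], intro ballI)
      fix i assume i: "i \<in> I"
      have "(\<lambda>n. (pc d (c n) ^^ i) (x n) - x n) \<longlonglongrightarrow> (pc d c0 ^^ i) z0 - z0"
        by (intro tendsto_diff pc_iter_tendsto[OF assms(3) that] that)
      moreover have "(pc d c0 ^^ i) z0 - z0 \<noteq> 0" using nz0[OF i] by simp
      ultimately show "eventually (\<lambda>n. (pc d (c n) ^^ i) (x n) - x n \<noteq> 0) sequentially"
        by (rule tendsto_imp_eventually_ne)
    qed
    thus ?thesis by eventually_elim (auto simp: I_def)
  qed
  have main: "eventually (\<lambda>n.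
        (\<exists>m. has_period (pc d (c n)) m (z n)) \<and> (\<exists>m. has_period (pc d (c n)) m (z' n)) \<and>
        ( (has_period (pc d (c n)) k (z n) \<and> has_period (pc d (c n)) k (z' n) \<and>
           mult2 d (c n) k (z n) \<in> \<real> \<and> mult2 d (c n) k (z' n) \<in> \<real> \<and>
           ((norm (mult2 d (c n) k (z n)) < 1 \<and> norm (mult2 d (c n) k (z' n)) > 1) \<or>
            (norm (mult2 d (c n) k (z n)) > 1 \<and> norm (mult2 d (c n) k (z' n)) < 1)))
        \<or> (z n = z' n \<and> parabolic d (c n) k (z n))
        \<or> (has_period (pc d (c n)) (2 * k) (z n) \<and> has_period (pc d (c n)) (2 * k) (z' n) \<and>
           (pc d (c n) ^^ k) (z n) = z' n \<and> (pc d (c n) ^^ k) (z' n) = z n \<and>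
           mult2 d (c n) k (z' n) = cnj (mult2 d (c n) k (z n)) \<and>
           mult2 d (c n) k (z n) \<notin> \<real> \<and>
           \<bar>Re (mult2 d (c n) k (z n) - 1)\<bar> \<le> M * (Im (mult2 d (c n) k (z n)))\<^sup>2))) sequentially"
    using ev1 ev2 evU evL ev5 ev6 evg[OF zt] evg[OF zt'] evp[OF zt] evp[OF zt']
  proof eventually_elim
    case (elim n)
    have facn: "Hp d z0 (c n) k - [:z0, 1:] = [:-r1 n, 1:] * [:-r2 n, 1:] * U n"
      using fac by (simp add: G_def)
    have lown: "\<forall>w. norm w \<le> \<delta> \<longrightarrow> norm a / 2 \<le> norm (poly (U n) w)" using elim(3) by blast
    show ?case
      using pointwise[OF k facn elim(1) elim(2) lown a elim(4) L0 M elim(5) elim(6)]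
        elim(7) elim(8) elim(9) elim(10) by (simp add: z_def z'_def)
  qed
  show ?thesis
    apply (rule exI[of _ z], rule exI[of _ z'])
    using zt zt' m1 m2 main by blast
qed

end
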